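(* Let $\|\cdot\|$ be a norm on $\mathbb{R}^d$ with $\|x\|\le\mu\|x\|_2$ for all $x$, and let $T:\mathbb{R}^d\to\mathbb{R}^d$ be a $\gamma$-contraction ($\gamma\in(0,1)$) with unique fixed point $x^*$. Let $\tilde T(x,\xi)$, $\xi\sim\mathcal{D}_x$, be a stochastic oracle with $\mathbb{E}(\tilde T(x,\xi))=Tx$ and $\sup_x\mathbb{E}(\|\tilde T(x,\xi)-Tx\|_2^2)\le\sigma^2$. Let $\varepsilon>0$ and $N=\left\lceil\frac{\|x^0-x^*\|+2\mu\sigma}{\varepsilon(1-\gamma)}\right\rceil$. Consider the stochastic Halpern method: for $n=1,\dots,N$, draw $k_n$ independent samples $\xi_{n,1},\dots,\xi_{n,k_n}\sim\mathcal{D}_{x^{n-1}}$ and set $x^n=(1-\beta_n)x^0+\beta_n\frac{1}{k_n}\sum_{j=1}^{k_n}\tilde T(x^{n-1},\xi_{n,j})$, with $\beta_n=\frac{n}{n+1}$ and $k_n=\lceil n^2\gamma^{N-n}\rceil$. Then the returned $x^N$ satisfies $\mathbb{E}(\|x^N-x^*\|)\le\varepsilon$, and the method uses at most $O\!\left(\frac{\|x^0-x^*\|^2+\mu^2\sigma^2}{\varepsilon^2(1-\gamma)^3}\right)$ queries to $\tilde T$.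
   Context: $\|\cdot\|_2$ is the Euclidean norm; the number of queries is $\sum_{n=1}^N k_n$. *)

theory Defs
  imports "HOL-Probability.Probability"
begin

definition is_norm :: "('a::real_vector \<Rightarrow> real) \<Rightarrow> bool" where
  "is_norm f \<longleftrightarrow> (\<forall>x. 0 \<le> f x) \<and> (\<forall>x. f x = 0 \<longleftrightarrow> x = 0) \<and>
     (\<forall>c x. f (c *\<^sub>R x) = \<bar>c\<bar> * f x) \<and> (\<forall>x y. f (x + y) \<le> f x + f y)"

text \<open>Law (distribution) of the iterate x^n of the stochastic Halpern method with
  anchor x0, weights beta n and batch sizes k n: at step n, k n fresh independent samples
  are drawn from D (x^(n-1)) and x^n is formed from their average.\<close>
primrec halpern_law ::
  "('v::euclidean_space \<Rightarrow> 'b measure) \<Rightarrow> ('v \<Rightarrow> 'b \<Rightarrow> 'v) \<Rightarrow> 'v \<Rightarrow>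
   (nat \<Rightarrow> real) \<Rightarrow> (nat \<Rightarrow> nat) \<Rightarrow> nat \<Rightarrow> 'v measure" where
  "halpern_law D Tt x0 beta k 0 = return borel x0"
| "halpern_law D Tt x0 beta k (Suc n) =
     halpern_law D Tt x0 beta k n \<bind>
       (\<lambda>y. distr (PiM {..<k (Suc n)} (\<lambda>_. D y)) borel
              (\<lambda>\<omega>. (1 - beta (Suc n)) *\<^sub>R x0 +
                   beta (Suc n) *\<^sub>R ((1 / real (k (Suc n))) *\<^sub>R
                      (\<Sum>j<k (Suc n). Tt y (\<omega> j)))))"

text \<open>Number of iterations N, with a = \<parallel>x0 - x*\<parallel> and s = \<mu>\<sigma>.\<close>
definition halpern_N :: "real \<Rightarrow> real \<Rightarrow> real \<Rightarrow> real \<Rightarrow> nat" where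
  "halpern_N a s \<epsilon> \<gamma> = nat \<lceil>(a + 2 * s) / (\<epsilon> * (1 - \<gamma>))\<rceil>"

definition halpern_batch :: "nat \<Rightarrow> real \<Rightarrow> nat \<Rightarrow> nat" where
  "halpern_batch N \<gamma> n = nat \<lceil>real n ^ 2 * \<gamma> ^ (N - n)\<rceil>"

definition halpern_queries :: "nat \<Rightarrow> real \<Rightarrow> nat" where
  "halpern_queries N \<gamma> = (\<Sum>n = 1..N. halpern_batch N \<gamma> n)"

end

theory Submission
  imports Defs
begin

lemma var_sum_real:
  fixes M :: "'b measure" and f :: "'b \<Rightarrow> real" and I :: "nat set"
  assumes P: "prob_space M" and fin: "finite I"
    and fint: "integrable M f" and f0: "(\<integral>x. f x \<partial>M) = 0"
    and f2: "integrable M (\<lambda>x. (f x)\<^sup>2)"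
  shows "integrable (PiM I (\<lambda>_. M)) (\<lambda>\<omega>. (\<Sum>j\<in>I. f (\<omega> j))\<^sup>2)
     \<and> (\<integral>\<omega>. (\<Sum>j\<in>I. f (\<omega> j))\<^sup>2 \<partial>PiM I (\<lambda>_. M)) = real (card I) * (\<integral>x. (f x)\<^sup>2 \<partial>M)"
proof -
  have PM1: "measure M (space M) = 1" using P by (simp add: prob_space.prob_space)
  interpret product_prob_space "\<lambda>_. M" I
    by (simp add: product_prob_space_def product_prob_space_axioms_def P product_sigma_finite_def
        prob_space_imp_sigma_finite)
  have eq: "(\<lambda>\<omega>. (\<Sum>j\<in>I. f (\<omega> j))\<^sup>2) = (\<lambda>\<omega>. \<Sum>i\<in>I. \<Sum>j\<in>I. f (\<omega> i) * f (\<omega> j))"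
    by (auto simp: power2_eq_square sum_product)
  define g :: "nat \<Rightarrow> nat \<Rightarrow> nat \<Rightarrow> 'b \<Rightarrow> real" where "g i j l = (if l = i then (if l = j then (\<lambda>x. (f x)\<^sup>2) else f)
      else if l = j then f else (\<lambda>_. 1::real))" for i j l
  have gint: "integrable M (g i j l)" for i j l
    unfolding g_def using fint f2 by auto
  have prodeq: "(\<Prod>l\<in>I. g i j l (\<omega> l)) = f (\<omega> i) * f (\<omega> j)" if "i \<in> I" "j \<in> I" for i j \<omega>
  proof (cases "i = j")
    case True
    then show ?thesis using that fin
      by (simp add: prod.remove[of I i] g_def power2_eq_square)
  next
    case False
    have "(\<Prod>l\<in>I. g i j l (\<omega> l)) = g i j i (\<omega> i) * (\<Prod>l\<in>I-{i}. g i j l (\<omega> l))"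
      using that fin by (simp add: prod.remove[of I i])
    also have "(\<Prod>l\<in>I-{i}. g i j l (\<omega> l)) = g i j j (\<omega> j) * (\<Prod>l\<in>I-{i}-{j}. g i j l (\<omega> l))"
      using that fin False by (simp add: prod.remove[of "I-{i}" j])
    also have "(\<Prod>l\<in>I-{i}-{j}. g i j l (\<omega> l)) = 1"
      by (rule prod.neutral) (auto simp: g_def)
    finally show ?thesis using False by (simp add: g_def)
  qed
  have intij: "integrable (PiM I (\<lambda>_. M)) (\<lambda>\<omega>. f (\<omega> i) * f (\<omega> j))
     \<and> (\<integral>\<omega>. f (\<omega> i) * f (\<omega> j) \<partial>PiM I (\<lambda>_. M)) = (if i = j then (\<integral>x. (f x)\<^sup>2 \<partial>M) else 0)"
    if "i \<in> I" "j \<in> I" for i j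
  proof -
    have i1: "integrable (PiM I (\<lambda>_. M)) (\<lambda>\<omega>. \<Prod>l\<in>I. g i j l (\<omega> l))"
      by (rule product_integrable_prod[OF fin gint])
    have i2: "(\<integral>\<omega>. (\<Prod>l\<in>I. g i j l (\<omega> l)) \<partial>PiM I (\<lambda>_. M)) = (\<Prod>l\<in>I. integral\<^sup>L M (g i j l))"
      by (rule product_integral_prod[OF fin gint])
    have i3: "(\<Prod>l\<in>I. integral\<^sup>L M (g i j l)) = (if i = j then (\<integral>x. (f x)\<^sup>2 \<partial>M) else 0)"
    proof (cases "i = j")
      case True
      have "(\<Prod>l\<in>I. integral\<^sup>L M (g i j l)) = integral\<^sup>L M (g i j i) * (\<Prod>l\<in>I-{i}. integral\<^sup>L M (g i j l))"
        using that fin by (simp add: prod.remove[of I i])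
      also have "(\<Prod>l\<in>I-{i}. integral\<^sup>L M (g i j l)) = 1"
        by (rule prod.neutral) (auto simp: g_def True PM1)
      finally show ?thesis using True by (simp add: g_def)
    next
      case False
      have "(\<Prod>l\<in>I. integral\<^sup>L M (g i j l)) = integral\<^sup>L M (g i j i) * (\<Prod>l\<in>I-{i}. integral\<^sup>L M (g i j l))"
        using that fin by (simp add: prod.remove[of I i])
      then show ?thesis using False f0 by (simp add: g_def)
    qed
    have "(\<lambda>\<omega>. \<Prod>l\<in>I. g i j l (\<omega> l)) = (\<lambda>\<omega>. f (\<omega> i) * f (\<omega> j))"
      using prodeq[OF that] by auto
    then show ?thesis using i1 i2 i3 by simp
  qed
  have int: "integrable (PiM I (\<lambda>_. M)) (\<lambda>\<omega>. \<Sum>i\<in>I. \<Sum>j\<in>I. f (\<omega> i) * f (\<omega> j))"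
    thm integrable_sum
    by (rule Bochner_Integration.integrable_sum, rule Bochner_Integration.integrable_sum) (use intij in blast)
  have "(\<integral>\<omega>. (\<Sum>i\<in>I. \<Sum>j\<in>I. f (\<omega> i) * f (\<omega> j)) \<partial>PiM I (\<lambda>_. M))
      = (\<Sum>i\<in>I. \<Sum>j\<in>I. (\<integral>\<omega>. f (\<omega> i) * f (\<omega> j) \<partial>PiM I (\<lambda>_. M)))"
    using intij by (simp add: integral_sum integrable_sum)
  also have "\<dots> = (\<Sum>i\<in>I. \<Sum>j\<in>I. (if i = j then (\<integral>x. (f x)\<^sup>2 \<partial>M) else 0))"
    using intij by (intro sum.cong refl) auto
  also have "\<dots> = real (card I) * (\<integral>x. (f x)\<^sup>2 \<partial>M)"
    using fin by (simp add: sum.delta)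
  finally show ?thesis using int eq by simp
qed

lemma norm_sq_basis: "(norm (z::'v::euclidean_space))\<^sup>2 = (\<Sum>b\<in>Basis. (z \<bullet> b)\<^sup>2)"
  unfolding power2_norm_eq_inner by (subst euclidean_inner) (simp add: power2_eq_square)

lemma var_sum_vec:
  fixes M :: "'b measure" and X :: "'b \<Rightarrow> 'v::euclidean_space" and I :: "nat set"
  assumes P: "prob_space M" and fin: "finite I"
    and Xint: "integrable M X" and Xm: "(\<integral>x. X x \<partial>M) = m"
    and var: "(\<integral>\<^sup>+x. ennreal ((norm (X x - m))\<^sup>2) \<partial>M) \<le> ennreal s2" and s2: "0 \<le> s2"
  shows "integrable (PiM I (\<lambda>_. M)) (\<lambda>\<omega>. (norm (\<Sum>j\<in>I. (X (\<omega> j) - m)))\<^sup>2)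
     \<and> (\<integral>\<omega>. (norm (\<Sum>j\<in>I. (X (\<omega> j) - m)))\<^sup>2 \<partial>PiM I (\<lambda>_. M)) \<le> real (card I) * s2"
proof -
  have Xmeas[measurable]: "X \<in> borel_measurable M" using Xint by auto
  have vint: "integrable M (\<lambda>x. (norm (X x - m))\<^sup>2)"
    unfolding integrable_iff_bounded
  proof
    show "(\<lambda>x. (norm (X x - m))\<^sup>2) \<in> borel_measurable M" by measurable
    have "(\<integral>\<^sup>+x. ennreal (norm ((norm (X x - m))\<^sup>2)) \<partial>M) = (\<integral>\<^sup>+x. ennreal ((norm (X x - m))\<^sup>2) \<partial>M)"
      by simp
    also have "\<dots> < \<infinity>" using var by (simp add: le_less_trans)
    finally show "(\<integral>\<^sup>+x. ennreal (norm ((norm (X x - m))\<^sup>2)) \<partial>M) < \<infinity>" .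
  qed
  have vle: "(\<integral>x. (norm (X x - m))\<^sup>2 \<partial>M) \<le> s2"
  proof -
    have "ennreal (\<integral>x. (norm (X x - m))\<^sup>2 \<partial>M) = (\<integral>\<^sup>+x. ennreal ((norm (X x - m))\<^sup>2) \<partial>M)"
      by (rule nn_integral_eq_integral[symmetric]) (use vint in auto)
    also have "\<dots> \<le> ennreal s2" by (rule var)
    finally show ?thesis using s2 by (simp add: ennreal_le_iff)
  qed
  define f where "f b x = X x \<bullet> b - m \<bullet> b" for b x
  have FM: "finite_measure M" using P by (simp add: prob_space_def)
  have fint: "integrable M (f b)" for b unfolding f_def using Xint
    by (intro Bochner_Integration.integrable_diff integrable_inner_left finite_measure.integrable_const[OF FM]) auto
  have f0: "(\<integral>x. f b x \<partial>M) = 0" for b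
  proof -
    have "(\<integral>x. f b x \<partial>M) = (\<integral>x. X x \<bullet> b \<partial>M) - (\<integral>x. m \<bullet> b \<partial>M)"
      unfolding f_def using Xint
      by (intro Bochner_Integration.integral_diff integrable_inner_left finite_measure.integrable_const[OF FM]) auto
    also have "\<dots> = 0" using Xint Xm prob_space.prob_space[OF P] by simp
    finally show ?thesis .
  qed
  have fb: "f b x = (X x - m) \<bullet> b" for b x by (simp add: f_def inner_diff_left)
  have f2int: "integrable M (\<lambda>x. (f b x)\<^sup>2)" if "b \<in> Basis" for b
  proof (rule Bochner_Integration.integrable_bound[OF vint])
    show "(\<lambda>x. (f b x)\<^sup>2) \<in> borel_measurable M" unfolding f_def by measurable
    show "AE x in M. norm ((f b x)\<^sup>2) \<le> norm ((norm (X x - m))\<^sup>2)"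
    proof (rule AE_I2)
      fix x
      have "\<bar>(X x - m) \<bullet> b\<bar> \<le> \<bar>norm (X x - m)\<bar>" using Basis_le_norm[OF that, of "X x - m"] by simp
      then show "norm ((f b x)\<^sup>2) \<le> norm ((norm (X x - m))\<^sup>2)"
        by (simp add: fb abs_le_square_iff[symmetric] del: abs_le_square_iff)
    qed
  qed
  have R: "integrable (PiM I (\<lambda>_. M)) (\<lambda>\<omega>. (\<Sum>j\<in>I. f b (\<omega> j))\<^sup>2)
     \<and> (\<integral>\<omega>. (\<Sum>j\<in>I. f b (\<omega> j))\<^sup>2 \<partial>PiM I (\<lambda>_. M)) = real (card I) * (\<integral>x. (f b x)\<^sup>2 \<partial>M)"
    if "b \<in> Basis" for b
    by (rule var_sum_real[OF P fin fint f0 f2int[OF that]])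
  have eq: "(norm (\<Sum>j\<in>I. (X (\<omega> j) - m)))\<^sup>2 = (\<Sum>b\<in>Basis. (\<Sum>j\<in>I. f b (\<omega> j))\<^sup>2)" for \<omega>
    by (simp add: norm_sq_basis inner_sum_left fb)
  have eq2: "(norm (X x - m))\<^sup>2 = (\<Sum>b\<in>Basis. (f b x)\<^sup>2)" for x
    by (simp add: norm_sq_basis fb)
  have i1: "integrable (PiM I (\<lambda>_. M)) (\<lambda>\<omega>. (norm (\<Sum>j\<in>I. (X (\<omega> j) - m)))\<^sup>2)"
    unfolding eq by (rule Bochner_Integration.integrable_sum) (use R in blast)
  have "(\<integral>\<omega>. (norm (\<Sum>j\<in>I. (X (\<omega> j) - m)))\<^sup>2 \<partial>PiM I (\<lambda>_. M))
      = (\<Sum>b\<in>Basis. (\<integral>\<omega>. (\<Sum>j\<in>I. f b (\<omega> j))\<^sup>2 \<partial>PiM I (\<lambda>_. M)))"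
    unfolding eq by (rule Bochner_Integration.integral_sum) (use R in blast)
  also have "\<dots> = (\<Sum>b\<in>Basis. real (card I) * (\<integral>x. (f b x)\<^sup>2 \<partial>M))"
    using R by (intro sum.cong) auto
  also have "\<dots> = real (card I) * (\<integral>x. (norm (X x - m))\<^sup>2 \<partial>M)"
    unfolding eq2 using f2int by (simp add: integral_sum sum_distrib_left)
  also have "\<dots> \<le> real (card I) * s2" using vle by (simp add: mult_left_mono)
  finally show ?thesis using i1 by simp
qed

lemma amgm_bound:
  fixes A V W :: real
  assumes "\<And>t. t > 0 \<Longrightarrow> A \<le> (V / t + t) / 2" "V \<le> W" "0 \<le> W"
  shows "A \<le> sqrt W"
proof (cases "W = 0")
  case True
  show ?thesis
  proof (rule ccontr)
    assume "\<not> A \<le> sqrt W"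
    then have "A > 0" using True by simp
    from assms(1)[OF this] have "A \<le> (V / A + A) / 2" .
    moreover have "V / A \<le> 0" using assms(2) True \<open>A > 0\<close> by (simp add: divide_nonpos_pos)
    ultimately have "A \<le> (u + A) / 2" "u \<le> 0" if "u = V / A" for u using that by auto
    then show False using \<open>A > 0\<close> by fastforce
  qed
next
  case False
  then have Wp: "W > 0" using assms(3) by simp
  have "A \<le> (V / sqrt W + sqrt W) / 2" using assms(1)[of "sqrt W"] Wp by simp
  also have "V / sqrt W \<le> W / sqrt W" using assms(2) Wp by (simp add: divide_right_mono)
  also have "W / sqrt W = sqrt W" using Wp by (metis real_div_sqrt less_eq_real_def)
  finally show ?thesis by simp
qed

lemma mean_norm_vec:
  fixes M :: "'b measure" and X :: "'b \<Rightarrow> 'v::euclidean_space" and I :: "nat set"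
  assumes P: "prob_space M" and fin: "finite I" and ne: "I \<noteq> {}"
    and Xint: "integrable M X" and Xm: "(\<integral>x. X x \<partial>M) = m"
    and var: "(\<integral>\<^sup>+x. ennreal ((norm (X x - m))\<^sup>2) \<partial>M) \<le> ennreal s2" and s2: "0 \<le> s2"
  shows "integrable (PiM I (\<lambda>_. M)) (\<lambda>\<omega>. norm ((1 / real (card I)) *\<^sub>R (\<Sum>j\<in>I. X (\<omega> j)) - m))
     \<and> (\<integral>\<omega>. norm ((1 / real (card I)) *\<^sub>R (\<Sum>j\<in>I. X (\<omega> j)) - m) \<partial>PiM I (\<lambda>_. M))
          \<le> sqrt s2 / sqrt (real (card I))"
proof -
  have Xmeas[measurable]: "X \<in> borel_measurable M" using Xint by auto
  have PP: "prob_space (PiM I (\<lambda>_. M))" by (rule prob_space_PiM) (use P in auto)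
  have FP: "finite_measure (PiM I (\<lambda>_. M))" using PP by (simp add: prob_space_def)
  define k where "k = real (card I)"
  have kpos: "k > 0" using fin ne by (simp add: k_def card_gt_0_iff)
  define Z where "Z \<omega> = (\<Sum>j\<in>I. (X (\<omega> j) - m))" for \<omega>
  have Zmeas[measurable]: "Z \<in> borel_measurable (PiM I (\<lambda>_. M))" unfolding Z_def by measurable
  have VS: "integrable (PiM I (\<lambda>_. M)) (\<lambda>\<omega>. (norm (Z \<omega>))\<^sup>2)
     \<and> (\<integral>\<omega>. (norm (Z \<omega>))\<^sup>2 \<partial>PiM I (\<lambda>_. M)) \<le> k * s2"
    unfolding Z_def k_def by (rule var_sum_vec[OF P fin Xint Xm var s2])
  have eqZ: "(1 / real (card I)) *\<^sub>R (\<Sum>j\<in>I. X (\<omega> j)) - m = (1 / k) *\<^sub>R Z \<omega>" for \<omega>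
    using kpos by (simp add: Z_def sum_subtractf k_def scaleR_diff_right sum_constant_scaleR)
  have nZ: "norm (Z \<omega>) \<le> ((norm (Z \<omega>))\<^sup>2 + 1) / 2" for \<omega>
    using sum_squares_bound[of "norm (Z \<omega>)" 1] by (simp add: power2_eq_square)
  have Zint: "integrable (PiM I (\<lambda>_. M)) (\<lambda>\<omega>. norm (Z \<omega>))"
  proof (rule Bochner_Integration.integrable_bound)
    show "integrable (PiM I (\<lambda>_. M)) (\<lambda>\<omega>. ((norm (Z \<omega>))\<^sup>2 + 1) / 2)"
      using VS finite_measure.integrable_const[OF FP]
      by (intro Bochner_Integration.integrable_divide Bochner_Integration.integrable_add) auto
    show "(\<lambda>\<omega>. norm (Z \<omega>)) \<in> borel_measurable (PiM I (\<lambda>_. M))" by measurable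
    show "AE \<omega> in PiM I (\<lambda>_. M). norm (norm (Z \<omega>)) \<le> norm (((norm (Z \<omega>))\<^sup>2 + 1) / 2)"
      using nZ by (auto intro!: AE_I2 simp: abs_le_iff intro: order_trans)
  qed
  have B: "(\<integral>\<omega>. norm (Z \<omega>) \<partial>PiM I (\<lambda>_. M)) \<le> sqrt (k * s2)"
  proof (rule amgm_bound)
    fix t :: real assume t: "t > 0"
    have pt: "norm (Z \<omega>) \<le> (norm (Z \<omega>))\<^sup>2 / t / 2 + t / 2" for \<omega>
    proof -
      have "0 \<le> (norm (Z \<omega>) - t)\<^sup>2" by simp
      then have "2 * t * norm (Z \<omega>) \<le> (norm (Z \<omega>))\<^sup>2 + t\<^sup>2"
        by (simp add: power2_diff algebra_simps)
      then show ?thesis using t by (simp add: field_simps power2_eq_square)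
    qed
    have "(\<integral>\<omega>. norm (Z \<omega>) \<partial>PiM I (\<lambda>_. M)) \<le> (\<integral>\<omega>. ((norm (Z \<omega>))\<^sup>2 / t / 2 + t / 2) \<partial>PiM I (\<lambda>_. M))"
      using VS Zint pt finite_measure.integrable_const[OF FP]
      by (intro integral_mono Bochner_Integration.integrable_divide Bochner_Integration.integrable_add) auto
    also have "\<dots> = (\<integral>\<omega>. (norm (Z \<omega>))\<^sup>2 \<partial>PiM I (\<lambda>_. M)) / t / 2 + t / 2"
      using VS prob_space.prob_space[OF PP] finite_measure.integrable_const[OF FP]
      by (subst Bochner_Integration.integral_add) (auto intro: Bochner_Integration.integrable_divide)
    finally show "(\<integral>\<omega>. norm (Z \<omega>) \<partial>PiM I (\<lambda>_. M)) \<le> ((\<integral>\<omega>. (norm (Z \<omega>))\<^sup>2 \<partial>PiM I (\<lambda>_. M)) / t + t) / 2"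
      by (simp add: field_simps)
  next
    show "(\<integral>\<omega>. (norm (Z \<omega>))\<^sup>2 \<partial>PiM I (\<lambda>_. M)) \<le> k * s2" using VS by simp
    show "0 \<le> k * s2" using kpos s2 by simp
  qed
  have i2: "integrable (PiM I (\<lambda>_. M)) (\<lambda>\<omega>. norm ((1 / real (card I)) *\<^sub>R (\<Sum>j\<in>I. X (\<omega> j)) - m))"
    unfolding eqZ using Zint kpos by simp
  have "(\<integral>\<omega>. norm ((1 / real (card I)) *\<^sub>R (\<Sum>j\<in>I. X (\<omega> j)) - m) \<partial>PiM I (\<lambda>_. M))
      = (\<integral>\<omega>. norm (Z \<omega>) \<partial>PiM I (\<lambda>_. M)) / k"
    unfolding eqZ using kpos by simp
  also have "\<dots> \<le> sqrt (k * s2) / k" using B kpos by (simp add: divide_right_mono)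
  also have "\<dots> = sqrt s2 / sqrt k" using kpos
    by (simp add: real_sqrt_mult field_simps)
  finally show ?thesis using i2 k_def by simp
qed

lemma PiM_kernel:
  assumes D: "D \<in> N \<rightarrow>\<^sub>M prob_algebra S" and fin: "finite I"
  shows "(\<lambda>y. PiM I (\<lambda>_. D y)) \<in> N \<rightarrow>\<^sub>M prob_algebra (PiM I (\<lambda>_. S))"
proof (rule measurable_prob_algebra_generated[where \<Omega>="PiE I (\<lambda>_. space S)" and G="prod_algebra I (\<lambda>_. S)"])
  show "sets (PiM I (\<lambda>_. S)) = sigma_sets (PiE I (\<lambda>_. space S)) (prod_algebra I (\<lambda>_. S))"
    by (rule sets_PiM)
  show "Int_stable (prod_algebra I (\<lambda>_. S))" by (rule Int_stable_prod_algebra)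
  show "prod_algebra I (\<lambda>_. S) \<subseteq> Pow (PiE I (\<lambda>_. space S))" by (rule prod_algebra_sets_into_space)
  have Da: "prob_space (D a) \<and> sets (D a) = sets S" if "a \<in> space N" for a
    using measurable_space[OF D that] by (simp add: space_prob_algebra)
  show "prob_space (PiM I (\<lambda>_. D a))" if "a \<in> space N" for a
    using Da[OF that] by (intro prob_space_PiM) blast
  show "sets (PiM I (\<lambda>_. D a)) = sets (PiM I (\<lambda>_. S))" if "a \<in> space N" for a
    using Da[OF that] by (intro sets_PiM_cong refl) blast
  fix A assume "A \<in> prod_algebra I (\<lambda>_. S)"
  then have "A \<in> {(\<Pi>\<^sub>E i\<in>I. X i) |X. X \<in> (\<Pi> j\<in>I. sets S)}"
    by (simp only: prod_algebra_eq_finite[OF fin])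
  then obtain X where A: "A = PiE I X" and X: "X \<in> (\<Pi> j\<in>I. sets S)"
    by blast
  have mp: "(\<lambda>a. \<Prod>i\<in>I. emeasure (D a) (X i)) \<in> borel_measurable N"
  proof (rule borel_measurable_prod_ennreal)
    fix i assume "i \<in> I"
    then have "X i \<in> sets S" using X by auto
    then show "(\<lambda>a. emeasure (D a) (X i)) \<in> borel_measurable N"
      by (rule measurable_compose[OF measurable_prob_algebraD[OF D] measurable_emeasure_subprob_algebra])
  qed
  have eq: "emeasure (PiM I (\<lambda>_. D a)) A = (\<Prod>i\<in>I. emeasure (D a) (X i))" if "a \<in> space N" for a
  proof -
    interpret product_sigma_finite "\<lambda>_. D a"
      using Da[OF that] by (simp add: product_sigma_finite_def prob_space_imp_sigma_finite)
    show ?thesis unfolding A by (rule emeasure_PiM[OF fin]) (use X Da[OF that] in auto)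
  qed
  show "(\<lambda>a. emeasure (PiM I (\<lambda>_. D a)) A) \<in> borel_measurable N"
    by (subst measurable_cong[OF eq]) (assumption, rule mp)
qed


lemma geom_le:
  fixes g :: real assumes "0 < g" "g < 1"
  shows "(\<Sum>n = 1..N. g ^ (N - n)) \<le> 1 / (1 - g)"
proof -
  have "(\<Sum>n = 1..N. g ^ (N - n)) = (\<Sum>i<N. g ^ i)"
  proof (rule sum.reindex_bij_witness[of _ "\<lambda>i. N - i" "\<lambda>n. N - n"]) qed auto
  also have "\<dots> = (1 - g ^ N) / (1 - g)" using assms by (simp add: sum_gp_strict)
  also have "\<dots> \<le> 1 / (1 - g)" using assms by (simp add: divide_right_mono)
  finally show ?thesis .
qed

lemma queries_le:
  fixes g :: real assumes g: "0 < g" "g < 1"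
  shows "real (halpern_queries N g) \<le> real N + (real N)\<^sup>2 / (1 - g)"
proof -
  have "real (halpern_queries N g) = (\<Sum>n = 1..N. real (nat \<lceil>real n ^ 2 * g ^ (N - n)\<rceil>))"
    by (simp add: halpern_queries_def halpern_batch_def)
  also have "\<dots> \<le> (\<Sum>n = 1..N. (real N)\<^sup>2 * g ^ (N - n) + 1)"
  proof (rule sum_mono)
    fix n assume n: "n \<in> {1..N}"
    have "real n ^ 2 * g ^ (N - n) \<le> (real N)\<^sup>2 * g ^ (N - n)"
      using n g by (intro mult_right_mono power_mono) auto
    moreover have "0 \<le> real n ^ 2 * g ^ (N - n)" using g by simp
    ultimately show "real (nat \<lceil>real n ^ 2 * g ^ (N - n)\<rceil>) \<le> (real N)\<^sup>2 * g ^ (N - n) + 1"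
      by linarith
  qed
  also have "\<dots> = (real N)\<^sup>2 * (\<Sum>n = 1..N. g ^ (N - n)) + real N"
    by (simp add: sum.distrib sum_distrib_left)
  also have "\<dots> \<le> (real N)\<^sup>2 * (1 / (1 - g)) + real N"
    using geom_le[OF g] by (intro add_right_mono mult_left_mono) auto
  finally show ?thesis by simp
qed

lemma queries_bound:
  "\<exists>C. \<forall>a s e g. 0 \<le> a \<longrightarrow> 0 \<le> s \<longrightarrow> 0 < e \<longrightarrow> 0 < g \<longrightarrow> g < 1 \<longrightarrow>
            real (halpern_queries (halpern_N a s e g) g)
              \<le> C * (1 + (a\<^sup>2 + s\<^sup>2) / (e\<^sup>2 * (1 - g) ^ 3))"
proof (intro exI[of _ 100] allI impI)
  fix a s e g :: real
  assume a: "0 \<le> a" and s: "0 \<le> s" and e: "0 < e" and g: "0 < g" "g < 1"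
  define X where "X = (a + 2 * s) / (e * (1 - g))"
  define N where "N = halpern_N a s e g"
  have X0: "0 \<le> X" using a s e g by (simp add: X_def)
  have NX: "N = nat \<lceil>X\<rceil>" by (simp add: N_def halpern_N_def X_def)
  have Rpos: "0 \<le> (a\<^sup>2 + s\<^sup>2) / (e\<^sup>2 * (1 - g) ^ 3)" using g by simp
  show "real (halpern_queries N g) \<le> 100 * (1 + (a\<^sup>2 + s\<^sup>2) / (e\<^sup>2 * (1 - g) ^ 3))"
    unfolding N_def[symmetric]
  proof (cases "N \<le> 1")
    case True
    have "real (halpern_queries N g) \<le> 1"
    proof (cases "N = 0")
      case True then show ?thesis by (simp add: halpern_queries_def)
    next
      case False
      with \<open>N \<le> 1\<close> have "N = 1" by simp
      then show ?thesis by (simp add: halpern_queries_def halpern_batch_def)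
    qed
    moreover have "\<And>h R::real. 0 \<le> R \<Longrightarrow> h \<le> 1 \<Longrightarrow> h \<le> 100 * (1 + R)"
      by (simp add: distrib_left)
    ultimately show ?thesis using Rpos by blast
  next
    case False
    then have "X > 1" using NX by linarith
    have N2X: "real N \<le> 2 * X" using NX \<open>X > 1\<close> by linarith
    have g1: "0 < 1 - g" "1 - g \<le> 1" using g by auto
    have X2: "X\<^sup>2 = (a + 2 * s)\<^sup>2 / (e\<^sup>2 * (1 - g)\<^sup>2)"
      by (simp add: X_def power_divide power_mult_distrib)
    have sq: "(a + 2 * s)\<^sup>2 \<le> 8 * (a\<^sup>2 + s\<^sup>2)"
    proof -
      have "0 \<le> (a - 2 * s)\<^sup>2" by simp
      then have e2: "4 * (a * s) \<le> a^2 + 4 * s^2" by (simp add: power2_eq_square algebra_simps)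
      have e1: "(a + 2 * s)^2 = a^2 + 4 * (a * s) + 4 * s^2" by (simp add: power2_eq_square algebra_simps)
      have "0 \<le> a^2" by simp
      then show ?thesis using e1 e2 by (smt (verit))
    qed
    have "X\<^sup>2 / (1 - g) = (a + 2 * s)\<^sup>2 / (e\<^sup>2 * (1 - g) ^ 3)"
    proof -
      have "(1 - g)^3 = (1 - g)\<^sup>2 * (1 - g)" by (simp add: power2_eq_square power3_eq_cube)
      then show ?thesis by (simp add: X2 divide_divide_eq_left mult.assoc)
    qed
    also have "\<dots> \<le> 8 * ((a\<^sup>2 + s\<^sup>2) / (e\<^sup>2 * (1 - g) ^ 3))"
      using sq g e by (simp add: divide_right_mono)
    finally have XR: "X\<^sup>2 / (1 - g) \<le> 8 * ((a\<^sup>2 + s\<^sup>2) / (e\<^sup>2 * (1 - g) ^ 3))" .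
    have Q: "real (halpern_queries N g) \<le> real N + (real N)\<^sup>2 / (1 - g)" by (rule queries_le[OF g])
    have "(real N)\<^sup>2 \<le> 4 * X\<^sup>2"
      using power_mono[OF N2X, of 2] by (simp add: power_mult_distrib)
    then have "(real N)\<^sup>2 / (1 - g) \<le> 4 * (X\<^sup>2 / (1 - g))" using g1 by (simp add: divide_right_mono)
    moreover have "X \<le> X\<^sup>2 / (1 - g)"
    proof -
      have "X \<le> X\<^sup>2" using \<open>X > 1\<close> by (simp add: power2_eq_square)
      also have "X\<^sup>2 \<le> X\<^sup>2 / (1 - g)" using g1
        by (simp add: le_divide_eq mult_left_le)
      finally show ?thesis .
    qed
    ultimately have "real N + (real N)\<^sup>2 / (1 - g) \<le> 6 * (X\<^sup>2 / (1 - g))" using N2X by linarith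
    then have "real (halpern_queries N g) \<le> 6 * (X\<^sup>2 / (1 - g))" using Q by linarith
    moreover have "\<And>h Y R::real. 0 \<le> R \<Longrightarrow> Y \<le> 8 * R \<Longrightarrow> h \<le> 6 * Y \<Longrightarrow> h \<le> 100 * (1 + R)"
      by (simp add: distrib_left)
    ultimately show ?thesis using XR Rpos by blast
  qed
qed


lemma step_real:
  fixes a s g :: real and n N :: nat
  assumes g: "0 < g" "g < 1" and a: "0 \<le> a" and s: "0 \<le> s" and n: "1 \<le> n" "n \<le> N"
  defines "q \<equiv> sqrt g"
  defines "Cf \<equiv> \<lambda>m::nat. (a / (1 - g) + s / ((1 - q) * q ^ (N - m))) / (real m + 1)"
  defines "kk \<equiv> nat \<lceil>real n ^ 2 * g ^ (N - n)\<rceil>"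
  shows "(1 - real n / (real n + 1)) * a + real n / (real n + 1) * g * Cf (n - 1)
           + real n / (real n + 1) * s / sqrt (real kk) \<le> Cf n"
proof -
  have q: "0 < q" "q < 1" using g by (auto simp: q_def)
  have gq: "g = q * q" using g by (simp add: q_def)
  define P where "P = q ^ (N - n)"
  have P: "0 < P" using q by (simp add: P_def)
  have "N - (n - 1) = Suc (N - n)" using n by simp
  then have Pm: "q ^ (N - (n - 1)) = q * P" by (simp add: P_def)
  have "Suc N - n = Suc (N - n)" using n by simp
  then have Pm': "q ^ (Suc N - n) = q * P" by (simp add: P_def)
  define A where "A = a / (1 - g)"
  define B where "B = s / (1 - q)"
  have AB: "A = a + g * A" "B = s + q * B" using g q by (auto simp: A_def B_def field_simps)
  have Cn: "Cf n = (A + B / P) / (real n + 1)"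
    by (simp add: Cf_def A_def B_def P_def)
  have Cm: "Cf (n - 1) = (A + B / (q * P)) / real n"
    using n by (simp add: Cf_def A_def B_def Pm Pm' of_nat_diff)
  have kk: "real n * P \<le> sqrt (real kk)"
  proof -
    have "(real n * P)\<^sup>2 = real n ^ 2 * g ^ (N - n)"
      by (simp add: P_def power_mult_distrib gq power2_eq_square power_mult[symmetric]
          flip: power_mult_distrib)
    also have "\<dots> \<le> real kk" unfolding kk_def by linarith
    finally show ?thesis using P by (intro real_le_rsqrt) auto
  qed
  have npos: "real n > 0" using n by simp
  have t3: "real n * s / sqrt (real kk) \<le> s / P"
  proof (cases "s = 0")
    case False
    then have "s > 0" using s by simp
    have "0 < sqrt (real kk)" using kk npos P by (smt (verit) mult_pos_pos)
    then show ?thesis using kk P \<open>s > 0\<close> npos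
      by (simp add: divide_simps)
  qed simp
  have "(real n + 1) * ((1 - real n / (real n + 1)) * a + real n / (real n + 1) * g * Cf (n - 1)
           + real n / (real n + 1) * s / sqrt (real kk))
        = a + g * (A + B / (q * P)) + real n * s / sqrt (real kk)"
  proof -
    have e1: "(real n + 1) * ((1 - real n / (real n + 1)) * a) = a" using npos by (simp add: field_simps)
    have e2: "(real n + 1) * (real n / (real n + 1) * g * Cf (n - 1)) = g * (A + B / (q * P))"
    proof -
      have h1: "(real n + 1) * (real n / (real n + 1)) = real n" using npos by simp
      have "(real n + 1) * (real n / (real n + 1) * g * Cf (n - 1))
          = ((real n + 1) * (real n / (real n + 1))) * g * Cf (n - 1)" by (simp only: mult.assoc)
      also have "\<dots> = g * (real n * ((A + B / (q * P)) / real n))" unfolding h1 Cm by simp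
      also have "\<dots> = g * (A + B / (q * P))" using npos by simp
      finally show ?thesis .
    qed
    have h1: "(real n + 1) * (real n / (real n + 1)) = real n" using npos by simp
    have e3: "(real n + 1) * (real n / (real n + 1) * s / sqrt (real kk)) = real n * s / sqrt (real kk)"
      using h1 by (metis (no_types, lifting) times_divide_eq_right mult.assoc)
    show ?thesis by (simp only: distrib_left e1 e2 e3)
  qed
  also have "\<dots> \<le> a + g * (A + B / (q * P)) + s / P" using t3 by simp
  also have "\<dots> = A + B / P"
  proof -
    have "g * (B / (q * P)) = q * B / P" using q P by (simp add: gq field_simps)
    then have "a + g * (A + B / (q * P)) + s / P = (a + g * A) + (s + q * B) / P"
      by (simp add: distrib_left add_divide_distrib)
    then show ?thesis using AB by simp
  qed
  also have "\<dots> = (real n + 1) * Cf n" using npos by (simp add: Cn)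
  finally show ?thesis using npos by (simp add: mult_le_cancel_left_pos)
qed


theorem corollary2:
  fixes nrm :: "real ^ 'd \<Rightarrow> real"
    and \<mu> \<gamma> \<sigma> \<epsilon> :: real
    and T :: "real ^ 'd \<Rightarrow> real ^ 'd"
    and xs x0 :: "real ^ 'd"
    and S :: "'b measure"
    and D :: "real ^ 'd \<Rightarrow> 'b measure"
    and Tt :: "real ^ 'd \<Rightarrow> 'b \<Rightarrow> real ^ 'd"
  assumes norm_nrm: "is_norm nrm"
    and nrm_le: "\<forall>x. nrm x \<le> \<mu> * norm x"
    and gamma: "0 < \<gamma>" "\<gamma> < 1"
    and contr: "\<forall>x y. nrm (T x - T y) \<le> \<gamma> * nrm (x - y)"
    and fixpt: "T xs = xs" "\<forall>y. T y = y \<longrightarrow> y = xs"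
    and D_kernel: "D \<in> borel \<rightarrow>\<^sub>M prob_algebra S"
    and Tt_meas: "(\<lambda>(x, \<xi>). Tt x \<xi>) \<in> borel \<Otimes>\<^sub>M S \<rightarrow>\<^sub>M borel"
    and unbiased: "\<forall>x. integrable (D x) (Tt x) \<and> (\<integral>\<xi>. Tt x \<xi> \<partial>D x) = T x"
    and sigma: "0 \<le> \<sigma>"
    and variance: "\<forall>x. (\<integral>\<^sup>+\<xi>. ennreal ((norm (Tt x \<xi> - T x))\<^sup>2) \<partial>D x) \<le> ennreal (\<sigma>\<^sup>2)"
    and eps: "0 < \<epsilon>"
  shows "(let N = halpern_N (nrm (x0 - xs)) (\<mu> * \<sigma>) \<epsilon> \<gamma> in
            (\<integral>\<^sup>+x. ennreal (nrm (x - xs))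
               \<partial>halpern_law D Tt x0 (\<lambda>n. real n / (real n + 1)) (halpern_batch N \<gamma>) N)
            \<le> ennreal \<epsilon>)
       \<and> (\<exists>C. \<forall>a s e g. 0 \<le> a \<longrightarrow> 0 \<le> s \<longrightarrow> 0 < e \<longrightarrow> 0 < g \<longrightarrow> g < 1 \<longrightarrow>
            real (halpern_queries (halpern_N a s e g) g)
              \<le> C * (1 + (a\<^sup>2 + s\<^sup>2) / (e\<^sup>2 * (1 - g) ^ 3)))"
proof -
  note Tt_meas[measurable]
  have nrm_nonneg: "0 \<le> nrm x" for x using norm_nrm by (simp add: is_norm_def)
  have nrm_zero: "nrm x = 0 \<longleftrightarrow> x = 0" for x using norm_nrm by (simp add: is_norm_def)
  have nrm_scale: "nrm (c *\<^sub>R x) = \<bar>c\<bar> * nrm x" for c x using norm_nrm by (simp add: is_norm_def)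
  have nrm_tri: "nrm (x + y) \<le> nrm x + nrm y" for x y using norm_nrm by (simp add: is_norm_def)
  have nrm_minus: "nrm (- x) = nrm x" for x using nrm_scale[of "-1" x] by simp
  have nrm_diff: "nrm x - nrm y \<le> nrm (x - y)" for x y using nrm_tri[of "x - y" y] by simp
  have mu: "0 \<le> \<mu>"
  proof -
    obtain b :: "real ^ 'd" where b: "b \<in> Basis" using nonempty_Basis by blast
    then have "b \<noteq> 0" by auto
    then have "0 < nrm b" using nrm_nonneg[of b] nrm_zero[of b] by simp
    moreover have "nrm b \<le> \<mu> * norm b" using nrm_le by simp
    moreover have "0 < norm b" using \<open>b \<noteq> 0\<close> by simp
    ultimately show ?thesis by (smt (verit) mult_nonpos_nonneg)
  qed
  have nrm_cont: "continuous_on UNIV nrm"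
  proof (rule lipschitz_on_continuous_on)
    show "\<mu>-lipschitz_on UNIV nrm"
    proof (rule lipschitz_onI)
      fix x y :: "real ^ 'd"
      have "nrm x - nrm y \<le> \<mu> * norm (x - y)" using nrm_diff[of x y] nrm_le by (meson order_trans)
      moreover have "nrm y - nrm x \<le> \<mu> * norm (x - y)"
        using nrm_diff[of y x] nrm_le norm_minus_commute[of y x] by (metis order_trans)
      ultimately show "dist (nrm x) (nrm y) \<le> \<mu> * dist x y" by (simp add: dist_real_def dist_norm abs_le_iff)
    qed (rule mu)
  qed
  have nrm_meas[measurable]: "nrm \<in> borel_measurable borel"
    by (rule borel_measurable_continuous_onI[OF nrm_cont])
  have Dy: "prob_space (D y)" "sets (D y) = sets S" for y
    using measurable_space[OF D_kernel, of y] by (auto simp: space_prob_algebra)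
  have Tty[measurable]: "Tt y \<in> borel_measurable (D y)" for y
  proof -
    have "(\<lambda>\<xi>. (\<lambda>(x, \<xi>). Tt x \<xi>) (y, \<xi>)) \<in> borel_measurable S"
      by (rule measurable_Pair2[OF Tt_meas]) simp
    then show ?thesis by (simp add: measurable_cong_sets[OF Dy(2) refl])
  qed
  define a where "a = nrm (x0 - xs)"
  define s where "s = \<mu> * \<sigma>"
  have a0: "0 \<le> a" using nrm_nonneg by (simp add: a_def)
  have s0: "0 \<le> s" using mu sigma by (simp add: s_def)
  define N where "N = halpern_N a s \<epsilon> \<gamma>"
  define \<beta> :: "nat \<Rightarrow> real" where "\<beta> = (\<lambda>n. real n / (real n + 1))"
  define k where "k = halpern_batch N \<gamma>"
  define law where "law = halpern_law D Tt x0 \<beta> k"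
  define G where "G = (\<lambda>kk b y \<omega>. (1 - b) *\<^sub>R x0 + b *\<^sub>R ((1 / real kk) *\<^sub>R (\<Sum>j<kk. Tt y (\<omega> j))))"
  have Gmeas: "(\<lambda>\<omega>. G kk b y \<omega>) \<in> PiM {..<kk} (\<lambda>_. D y) \<rightarrow>\<^sub>M borel" for kk b y
    unfolding G_def by measurable
  have Kmeas: "(\<lambda>y. distr (PiM {..<kk} (\<lambda>_. D y)) borel (G kk b y)) \<in> borel \<rightarrow>\<^sub>M prob_algebra borel"
    for kk b
  proof (rule measurable_distr_prob_space2[OF PiM_kernel[OF D_kernel finite_lessThan]])
    show "(\<lambda>(y, \<omega>). G kk b y \<omega>) \<in> borel \<Otimes>\<^sub>M PiM {..<kk} (\<lambda>_. S) \<rightarrow>\<^sub>M borel"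
      unfolding G_def by measurable
  qed
  have lawS: "law (Suc n) = law n \<bind> (\<lambda>y. distr (PiM {..<k (Suc n)} (\<lambda>_. D y)) borel (G (k (Suc n)) (\<beta> (Suc n)) y))" for n
    unfolding law_def G_def halpern_law.simps by (rule refl)
  have lawsp: "law n \<in> space (prob_algebra borel)" for n
  proof (induction n)
    case 0
    show ?case unfolding law_def halpern_law.simps
      by (rule measurable_space[OF measurable_return_prob_space]) simp
  next
    case (Suc n)
    show ?case unfolding lawS space_prob_algebra
      using prob_space_bind'[OF Suc Kmeas] sets_bind'[OF Suc Kmeas] by simp
  qed
  have stepb: "(\<integral>\<^sup>+\<omega>. ennreal (nrm (G kk b y \<omega> - xs)) \<partial>PiM {..<kk} (\<lambda>_. D y))
      \<le> ennreal ((1 - b) * a + b * \<gamma> * nrm (y - xs) + b * s / sqrt (real kk))"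
    if b: "0 \<le> b" "b \<le> 1" and kk: "1 \<le> kk" for y b kk
  proof -
    let ?M = "PiM {..<kk} (\<lambda>_. D y)"
    have PM: "prob_space ?M" by (rule prob_space_PiM) (use Dy in auto)
    have FM: "finite_measure ?M" using PM by (simp add: prob_space_def)
    define avg where "avg \<omega> = (1 / real kk) *\<^sub>R (\<Sum>j<kk. Tt y (\<omega> j))" for \<omega>
    have MN: "integrable ?M (\<lambda>\<omega>. norm (avg \<omega> - T y)) \<and> (\<integral>\<omega>. norm (avg \<omega> - T y) \<partial>?M) \<le> \<sigma> / sqrt (real kk)"
    proof -
      have ne: "{..<kk} \<noteq> {}" using kk by (simp add: lessThan_empty_iff)
      from mean_norm_vec[OF Dy(1) finite_lessThan _ conjunct1[OF unbiased[rule_format, of y]]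
          conjunct2[OF unbiased[rule_format, of y]] variance[rule_format, of y], of kk] ne sigma
      show ?thesis by (simp add: avg_def)
    qed
    define c where "c = (1 - b) * a + b * \<gamma> * nrm (y - xs)"
    have c0: "0 \<le> c" using b a0 gamma nrm_nonneg by (simp add: c_def)
    have pw: "nrm (G kk b y \<omega> - xs) \<le> c + b * \<mu> * norm (avg \<omega> - T y)" for \<omega>
    proof -
      have eq: "G kk b y \<omega> - xs = (1 - b) *\<^sub>R (x0 - xs) + b *\<^sub>R (T y - T xs) + b *\<^sub>R (avg \<omega> - T y)"
        by (simp add: G_def avg_def fixpt(1) algebra_simps)
      have "nrm (G kk b y \<omega> - xs) \<le> nrm ((1 - b) *\<^sub>R (x0 - xs)) + nrm (b *\<^sub>R (T y - T xs)) + nrm (b *\<^sub>R (avg \<omega> - T y))"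
        unfolding eq by (meson nrm_tri add_mono order_trans order_refl)
      also have "\<dots> = (1 - b) * a + b * nrm (T y - T xs) + b * nrm (avg \<omega> - T y)"
        using b by (simp add: nrm_scale a_def)
      also have "\<dots> \<le> (1 - b) * a + b * (\<gamma> * nrm (y - xs)) + b * (\<mu> * norm (avg \<omega> - T y))"
        using b contr nrm_le by (intro add_mono mult_left_mono order_refl) auto
      finally show ?thesis by (simp add: c_def mult.assoc)
    qed
    have int2: "integrable ?M (\<lambda>\<omega>. c + b * \<mu> * norm (avg \<omega> - T y))"
      using MN finite_measure.integrable_const[OF FM]
      by (intro Bochner_Integration.integrable_add Bochner_Integration.integrable_mult_right) auto
    have "(\<integral>\<^sup>+\<omega>. ennreal (nrm (G kk b y \<omega> - xs)) \<partial>?M) \<le> (\<integral>\<^sup>+\<omega>. ennreal (c + b * \<mu> * norm (avg \<omega> - T y)) \<partial>?M)"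
      using pw by (intro nn_integral_mono) (simp add: ennreal_leI)
    also have "\<dots> = ennreal (\<integral>\<omega>. (c + b * \<mu> * norm (avg \<omega> - T y)) \<partial>?M)"
      using int2 c0 b mu by (intro nn_integral_eq_integral) auto
    also have "(\<integral>\<omega>. (c + b * \<mu> * norm (avg \<omega> - T y)) \<partial>?M) = c + b * \<mu> * (\<integral>\<omega>. norm (avg \<omega> - T y) \<partial>?M)"
      using MN finite_measure.integrable_const[OF FM] prob_space.prob_space[OF PM]
      by (subst Bochner_Integration.integral_add) auto
    also have "\<dots> \<le> c + b * \<mu> * (\<sigma> / sqrt (real kk))"
      using MN b mu by (intro add_left_mono mult_left_mono) auto
    finally show ?thesis by (simp add: c_def s_def ennreal_leI mult.assoc)
  qed
  define q where "q = sqrt \<gamma>"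
  define Cf where "Cf = (\<lambda>m::nat. (a / (1 - \<gamma>) + s / ((1 - q) * q ^ (N - m))) / (real m + 1))"
  have q: "0 < q" "q < 1" using gamma by (auto simp: q_def)
  have fmeas[measurable]: "(\<lambda>x. ennreal (nrm (x - xs))) \<in> borel_measurable borel" by measurable
  have mainb: "n \<le> N \<Longrightarrow> (\<integral>\<^sup>+x. ennreal (nrm (x - xs)) \<partial>law n) \<le> ennreal (Cf n)" for n
  proof (induction n)
    case 0
    have "(\<integral>\<^sup>+x. ennreal (nrm (x - xs)) \<partial>law 0) = ennreal a"
      unfolding law_def halpern_law.simps by (subst nn_integral_return) (auto simp: a_def)
    also have "a \<le> Cf 0"
    proof -
      have "a \<le> a / (1 - \<gamma>)" using gamma a0 by (simp add: le_divide_eq mult_left_le)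
      moreover have "0 \<le> s / ((1 - q) * q ^ N)" using q s0 by simp
      ultimately show ?thesis by (simp add: Cf_def)
    qed
    finally show ?case by (simp add: ennreal_leI)
  next
    case (Suc m)
    let ?kk = "k (Suc m)" and ?b = "\<beta> (Suc m)"
    have IH: "(\<integral>\<^sup>+x. ennreal (nrm (x - xs)) \<partial>law m) \<le> ennreal (Cf m)" using Suc by simp
    have sets_law: "sets (law m) = sets borel" using lawsp[of m] by (simp add: space_prob_algebra)
    have Pl: "prob_space (law m)" using lawsp[of m] by (simp add: space_prob_algebra)
    have kk1: "1 \<le> ?kk"
    proof -
      have "0 < real (Suc m) ^ 2 * \<gamma> ^ (N - Suc m)" using gamma by simp
      then have "1 \<le> \<lceil>real (Suc m) ^ 2 * \<gamma> ^ (N - Suc m)\<rceil>" by (simp only: one_le_ceiling)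
      then show ?thesis unfolding k_def halpern_batch_def by linarith
    qed
    have b: "0 \<le> ?b" "?b \<le> 1" by (auto simp: \<beta>_def)
    have Km: "(\<lambda>y. distr (PiM {..<?kk} (\<lambda>_. D y)) borel (G ?kk ?b y)) \<in> law m \<rightarrow>\<^sub>M subprob_algebra borel"
      using measurable_prob_algebraD[OF Kmeas] by (simp add: measurable_cong_sets[OF sets_law refl])
    have "(\<integral>\<^sup>+x. ennreal (nrm (x - xs)) \<partial>law (Suc m))
        = (\<integral>\<^sup>+y. (\<integral>\<^sup>+x. ennreal (nrm (x - xs)) \<partial>distr (PiM {..<?kk} (\<lambda>_. D y)) borel (G ?kk ?b y)) \<partial>law m)"
      unfolding lawS by (rule nn_integral_bind[OF fmeas Km])
    also have "\<dots> = (\<integral>\<^sup>+y. (\<integral>\<^sup>+\<omega>. ennreal (nrm (G ?kk ?b y \<omega> - xs)) \<partial>PiM {..<?kk} (\<lambda>_. D y)) \<partial>law m)"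
      by (intro nn_integral_cong nn_integral_distr Gmeas) simp
    also have "\<dots> \<le> (\<integral>\<^sup>+y. ennreal (((1 - ?b) * a + ?b * s / sqrt (real ?kk)) + (?b * \<gamma>) * nrm (y - xs)) \<partial>law m)"
      using stepb[OF b kk1] by (intro nn_integral_mono) (simp add: algebra_simps)
    also have "\<dots> = ennreal ((1 - ?b) * a + ?b * s / sqrt (real ?kk)) + ennreal (?b * \<gamma>) * (\<integral>\<^sup>+y. ennreal (nrm (y - xs)) \<partial>law m)"
    proof -
      have nn: "0 \<le> (1 - ?b) * a + ?b * s / sqrt (real ?kk)" "0 \<le> ?b * \<gamma>"
        using b a0 s0 gamma by auto
      have "(\<integral>\<^sup>+y. ennreal (((1 - ?b) * a + ?b * s / sqrt (real ?kk)) + (?b * \<gamma>) * nrm (y - xs)) \<partial>law m)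
          = (\<integral>\<^sup>+y. ennreal ((1 - ?b) * a + ?b * s / sqrt (real ?kk)) + ennreal (?b * \<gamma>) * ennreal (nrm (y - xs)) \<partial>law m)"
        using nn nrm_nonneg by (intro nn_integral_cong) (simp add: ennreal_plus ennreal_mult)
      also have "\<dots> = (\<integral>\<^sup>+y. ennreal ((1 - ?b) * a + ?b * s / sqrt (real ?kk)) \<partial>law m)
           + (\<integral>\<^sup>+y. ennreal (?b * \<gamma>) * ennreal (nrm (y - xs)) \<partial>law m)"
        by (rule nn_integral_add) (auto simp: measurable_cong_sets[OF sets_law refl])
      also have "\<dots> = ennreal ((1 - ?b) * a + ?b * s / sqrt (real ?kk)) + ennreal (?b * \<gamma>) * (\<integral>\<^sup>+y. ennreal (nrm (y - xs)) \<partial>law m)"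
        using prob_space.emeasure_space_1[OF Pl]
        by (subst nn_integral_cmult) (auto simp: measurable_cong_sets[OF sets_law refl])
      finally show ?thesis .
    qed
    also have "\<dots> \<le> ennreal ((1 - ?b) * a + ?b * s / sqrt (real ?kk)) + ennreal (?b * \<gamma>) * ennreal (Cf m)"
      using IH by (intro add_left_mono mult_left_mono) auto
    also have "\<dots> = ennreal ((1 - ?b) * a + ?b * s / sqrt (real ?kk) + ?b * \<gamma> * Cf m)"
    proof -
      have "0 \<le> Cf m" using a0 s0 gamma q by (simp add: Cf_def)
      moreover have "0 \<le> (1 - ?b) * a + ?b * s / sqrt (real ?kk)" "0 \<le> ?b * \<gamma>"
        using b a0 s0 gamma by auto
      ultimately show ?thesis by (simp add: ennreal_plus ennreal_mult)
    qed
    also have "\<dots> \<le> ennreal (Cf (Suc m))"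
    proof (rule ennreal_leI)
      have "(1 - ?b) * a + ?b * \<gamma> * Cf (Suc m - 1) + ?b * s / sqrt (real ?kk) \<le> Cf (Suc m)"
        using step_real[OF gamma a0 s0, of "Suc m" N] Suc.prems
        unfolding Cf_def q_def \<beta>_def k_def halpern_batch_def by simp
      then show "(1 - ?b) * a + ?b * s / sqrt (real ?kk) + ?b * \<gamma> * Cf m \<le> Cf (Suc m)" by simp
    qed
    finally show ?case .
  qed
  have "Cf N \<le> \<epsilon>"
  proof -
    have "1 - \<gamma> = (1 - q) * (1 + q)" using gamma by (simp add: q_def algebra_simps)
    moreover have "(1 - q) * (1 + q) \<le> (1 - q) * 2" by (rule mult_left_mono) (use q in auto)
    ultimately have "1 - \<gamma> \<le> 2 * (1 - q)" by simp
    then have "s * (1 - \<gamma>) \<le> s * (2 * (1 - q))" using s0 by (rule mult_left_mono)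
    then have B: "s / (1 - q) \<le> 2 * s / (1 - \<gamma>)" using q gamma s0
      by (simp add: divide_simps) (simp add: algebra_simps)
    have "(a + 2 * s) / (\<epsilon> * (1 - \<gamma>)) \<le> real N"
      unfolding N_def halpern_N_def by linarith
    then have "a + 2 * s \<le> real N * (\<epsilon> * (1 - \<gamma>))"
      using eps gamma by (simp add: pos_divide_le_eq)
    then have "(a + 2 * s) / (1 - \<gamma>) \<le> \<epsilon> * real N"
      using eps gamma by (simp add: pos_divide_le_eq mult.commute mult.left_commute)
    also have "\<dots> \<le> \<epsilon> * (real N + 1)" using eps by simp
    finally have "(a + 2 * s) / (1 - \<gamma>) \<le> \<epsilon> * (real N + 1)" .
    moreover have "Cf N = (a / (1 - \<gamma>) + s / (1 - q)) / (real N + 1)" by (simp add: Cf_def)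
    moreover have "a / (1 - \<gamma>) + s / (1 - q) \<le> (a + 2 * s) / (1 - \<gamma>)"
      using B by (simp add: add_divide_distrib)
    ultimately have "a / (1 - \<gamma>) + s / (1 - q) \<le> \<epsilon> * (real N + 1)"
      and CN: "Cf N = (a / (1 - \<gamma>) + s / (1 - q)) / (real N + 1)" by linarith+
    then show ?thesis unfolding CN by (simp add: pos_divide_le_eq add_pos_nonneg)
  qed
  then have P1: "(\<integral>\<^sup>+x. ennreal (nrm (x - xs)) \<partial>law N) \<le> ennreal \<epsilon>"
    using mainb[of N] by (meson ennreal_leI order_trans order_refl)
  show ?thesis
    using P1 queries_bound unfolding Let_def law_def k_def \<beta>_def N_def a_def s_def by blast
qed

end
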